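(* Let $G$ be a finite group, let $n,m$ be positive integers with $m\mid n$, let $l\in\mathbb{Z}$ and let $\varepsilon=(\varepsilon_d)_{d\mid n}\in \mathrm{VPA}_n(G)$. Let $\chi$ be either an ordinary character of $G$ or a Brauer character of $G$ modulo a prime not dividing $n$. Then $$\mu(\zeta_m^l,\varepsilon^{n/m},\chi)=\sum_{\xi\in\mathbb{C},\ \xi^{n/m}=\zeta_m^l}\mu(\xi,\varepsilon,\chi).$$
   Context: For a positive integer $k$, $\zeta_k$ denotes a complex primitive $k$-th root of unity, chosen so that $\zeta_n^{n/m}=\zeta_m$; $\mathrm{Tr}_{F/K}$ denotes the trace of a number field extension. $\sum_{x^G}$ denotes a sum over representatives of the conjugacy classes of $G$. Brauer characters modulo a prime $p$ are taken with respect to a sufficiently large $p$-modular system. A distribution of virtual partial augmentations of order $n$ for $G$ is a list $\varepsilon=(\varepsilon_d)_{d\mid n}$ of integer-valued class functions of $G$ such that: (V1) $\sum_{x^G}\varepsilon_d(x)=1$ for each $d$; (V2) $\varepsilon_d(1)=0$ if $d\ne n$; (V3) $\varepsilon_d(x)=0$ if $|x|$ does not divide $n/d$; (V4) for every ordinary character $\chi$ of $G$ or Brauer character $\chi$ of $G$ modulo a prime not dividing $n$, and every $n$-th root of unity $\xi$, the number $\mu(\xi,\varepsilon,\chi)=\frac{1}{n}\sum_{x^G}\sum_{d\mid n}\varepsilon_d(x)\mathrm{Tr}_{\mathbb{Q}(\zeta_n^d)/\mathbb{Q}}(\chi(x)\xi^{-d})$ is a non-negative integer. $\mathrm{VPA}_n(G)$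 is the set of these lists; the same formula defines $\mu(\xi,\varepsilon,\chi)$ for any such list. For $m\mid n$, $\varepsilon^{n/m}=((\varepsilon^{n/m})_d)_{d\mid m}$ is defined by $(\varepsilon^{n/m})_d(g)=\varepsilon_{dn/m}(g)$, and $\mu(\zeta_m^l,\varepsilon^{n/m},\chi)=\frac1m\sum_{x^G}\sum_{d\mid m}(\varepsilon^{n/m})_d(x)\mathrm{Tr}_{\mathbb{Q}(\zeta_m^d)/\mathbb{Q}}(\chi(x)\zeta_m^{-ld})$. *)

theory Defs
  imports "HOL-Algebra.Multiplicative_Group" "HOL-Computational_Algebra.Polynomial" Complex_Main
begin

text \<open>Primitive k-th root of unity; with this choice zeta n ^ (n div m) = zeta m for m dvd n.\<close>
definition zeta :: "nat \<Rightarrow> complex" where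
  "zeta k = cis (2 * pi / real k)"

definition in_cyc_field :: "nat \<Rightarrow> complex \<Rightarrow> bool" where
  "in_cyc_field k a \<longleftrightarrow> (\<exists>p :: rat poly. poly (map_poly of_rat p) (zeta k) = a)"

text \<open>Trace Tr of Q(zeta k)/Q: the sum of the Galois conjugates of a, the Galois automorphisms
  being zeta k to zeta k ^ j for 0 \<le> j < k with j coprime to k. (Only meaningful for a in
  Q(zeta k); the value 0 is a junk value otherwise.)\<close>
definition cyc_trace :: "nat \<Rightarrow> complex \<Rightarrow> complex" where
  "cyc_trace k a =
     (if in_cyc_field k a then
        (let p = (SOME p :: rat poly. poly (map_poly of_rat p) (zeta k) = a)
         in \<Sum>j\<in>{j. j < k \<and> coprime j k}. poly (map_poly of_rat p) (zeta k ^ j))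
      else 0)"

definition conj_classes :: "('g, 'b) monoid_scheme \<Rightarrow> 'g set set" where
  "conj_classes G =
     (\<lambda>x. {h \<otimes>\<^bsub>G\<^esub> x \<otimes>\<^bsub>G\<^esub> inv\<^bsub>G\<^esub> h | h. h \<in> carrier G}) ` carrier G"

definition sum_classes :: "('g, 'b) monoid_scheme \<Rightarrow> ('g \<Rightarrow> 'c::comm_monoid_add) \<Rightarrow> 'c" where
  "sum_classes G f = (\<Sum>C\<in>conj_classes G. f (SOME x. x \<in> C))"

definition class_function :: "('g, 'b) monoid_scheme \<Rightarrow> ('g \<Rightarrow> 'c) \<Rightarrow> bool" where
  "class_function G f \<longleftrightarrow>
     (\<forall>g\<in>carrier G. \<forall>h\<in>carrier G. f (h \<otimes>\<^bsub>G\<^esub> g \<otimes>\<^bsub>G\<^esub> inv\<^bsub>G\<^esub> h) = f g)"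

text \<open>Matrices of size d x d are represented as functions nat => nat => _, only the entries
  with indices < d being relevant.\<close>

definition cmat_mult :: "nat \<Rightarrow> (nat \<Rightarrow> nat \<Rightarrow> complex) \<Rightarrow> (nat \<Rightarrow> nat \<Rightarrow> complex) \<Rightarrow> nat \<Rightarrow> nat \<Rightarrow> complex" where
  "cmat_mult d A B = (\<lambda>i j. \<Sum>k<d. A i k * B k j)"

definition complex_rep :: "('g, 'b) monoid_scheme \<Rightarrow> nat \<Rightarrow> ('g \<Rightarrow> nat \<Rightarrow> nat \<Rightarrow> complex) \<Rightarrow> bool" where
  "complex_rep G d \<rho> \<longleftrightarrow>
     (\<forall>i<d. \<forall>j<d. \<rho> \<one>\<^bsub>G\<^esub> i j = (if i = j then 1 else 0)) \<and>
     (\<forall>g\<in>carrier G. \<forall>h\<in>carrier G. \<forall>i<d. \<forall>j<d.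
        \<rho> (g \<otimes>\<^bsub>G\<^esub> h) i j = cmat_mult d (\<rho> g) (\<rho> h) i j)"

definition ordinary_char :: "('g, 'b) monoid_scheme \<Rightarrow> ('g \<Rightarrow> complex) \<Rightarrow> bool" where
  "ordinary_char G \<chi> \<longleftrightarrow>
     (\<exists>d \<rho>. d > 0 \<and> complex_rep G d \<rho> \<and> (\<forall>g\<in>carrier G. \<chi> g = (\<Sum>i<d. \<rho> g i i)))"

definition rmat_mult :: "('a, 'c) ring_scheme \<Rightarrow> nat \<Rightarrow> (nat \<Rightarrow> nat \<Rightarrow> 'a) \<Rightarrow> (nat \<Rightarrow> nat \<Rightarrow> 'a) \<Rightarrow> nat \<Rightarrow> nat \<Rightarrow> 'a" where
  "rmat_mult R d A B = (\<lambda>i j. \<Oplus>\<^bsub>R\<^esub> k\<in>{..<d}. A i k \<otimes>\<^bsub>R\<^esub> B k j)"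

definition rmat_carrier :: "('a, 'c) ring_scheme \<Rightarrow> nat \<Rightarrow> (nat \<Rightarrow> nat \<Rightarrow> 'a) \<Rightarrow> bool" where
  "rmat_carrier R d A \<longleftrightarrow> (\<forall>i<d. \<forall>j<d. A i j \<in> carrier R)"

definition rmat_is_one :: "('a, 'c) ring_scheme \<Rightarrow> nat \<Rightarrow> (nat \<Rightarrow> nat \<Rightarrow> 'a) \<Rightarrow> bool" where
  "rmat_is_one R d A \<longleftrightarrow> (\<forall>i<d. \<forall>j<d. A i j = (if i = j then \<one>\<^bsub>R\<^esub> else \<zero>\<^bsub>R\<^esub>))"

definition ring_rep :: "('a, 'c) ring_scheme \<Rightarrow> ('g, 'b) monoid_scheme \<Rightarrow> nat \<Rightarrow> ('g \<Rightarrow> nat \<Rightarrow> nat \<Rightarrow> 'a) \<Rightarrow> bool" where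
  "ring_rep R G d \<rho> \<longleftrightarrow>
     (\<forall>g\<in>carrier G. rmat_carrier R d (\<rho> g)) \<and>
     rmat_is_one R d (\<rho> \<one>\<^bsub>G\<^esub>) \<and>
     (\<forall>g\<in>carrier G. \<forall>h\<in>carrier G. \<forall>i<d. \<forall>j<d.
        \<rho> (g \<otimes>\<^bsub>G\<^esub> h) i j = rmat_mult R d (\<rho> g) (\<rho> h) i j)"

text \<open>The d x d matrix A over R has eigenvalues (with multiplicities) lam 0, ..., lam (d-1) in R:
  A is conjugate over R to an upper triangular matrix with diagonal lam.\<close>
definition rmat_eigenvalues :: "('a, 'c) ring_scheme \<Rightarrow> nat \<Rightarrow> (nat \<Rightarrow> nat \<Rightarrow> 'a) \<Rightarrow> (nat \<Rightarrow> 'a) \<Rightarrow> bool" where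
  "rmat_eigenvalues R d A lam \<longleftrightarrow>
     (\<exists>P Q. rmat_carrier R d P \<and> rmat_carrier R d Q \<and> rmat_is_one R d (rmat_mult R d P Q) \<and>
        (\<forall>i<d. rmat_mult R d (rmat_mult R d P A) Q i i = lam i \<and>
           (\<forall>j<i. rmat_mult R d (rmat_mult R d P A) Q i j = \<zero>\<^bsub>R\<^esub>)))"

text \<open>Brauer character modulo the prime p: the residue field F is a finite field of
  characteristic p (of a sufficiently large p-modular system; its carrier is coded as a set of
  natural numbers), theta is the identification of the (p'-order) roots of unity of F with
  complex roots of unity (an injective homomorphism from the unit group of F into C^*),
  and the Brauer character of an FG-module with matrix representation rho takes at a
  p-regular element g the value sum over the eigenvalues lam of rho g of theta lam.
  It is a function on p-regular elements; we set it to 0 on the p-singular ones.\<close>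
definition brauer_char :: "('g, 'b) monoid_scheme \<Rightarrow> nat \<Rightarrow> ('g \<Rightarrow> complex) \<Rightarrow> bool" where
  "brauer_char G p \<chi> \<longleftrightarrow> prime p \<and>
     (\<exists>(F :: nat ring) (\<theta> :: nat \<Rightarrow> complex) d \<rho>.
        field F \<and> finite (carrier F) \<and> [p] \<cdot>\<^bsub>F\<^esub> \<one>\<^bsub>F\<^esub> = \<zero>\<^bsub>F\<^esub> \<and>
        inj_on \<theta> (carrier F - {\<zero>\<^bsub>F\<^esub>}) \<and>
        (\<forall>a\<in>carrier F - {\<zero>\<^bsub>F\<^esub>}. \<forall>b\<in>carrier F - {\<zero>\<^bsub>F\<^esub>}. \<theta> (a \<otimes>\<^bsub>F\<^esub> b) = \<theta> a * \<theta> b) \<and>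
        d > 0 \<and> ring_rep F G d \<rho> \<and>
        (\<forall>g\<in>carrier G.
           if p dvd group.ord G g then \<chi> g = 0
           else (\<exists>lam. rmat_eigenvalues F d (\<rho> g) lam \<and> \<chi> g = (\<Sum>i<d. \<theta> (lam i)))))"

text \<open>mu(xi, eps, chi) for a list eps = (eps_d)_{d dvd n}, encoded as eps d g.\<close>
definition mu :: "('g, 'b) monoid_scheme \<Rightarrow> nat \<Rightarrow> (nat \<Rightarrow> 'g \<Rightarrow> int) \<Rightarrow> ('g \<Rightarrow> complex) \<Rightarrow> complex \<Rightarrow> complex" where
  "mu G n \<epsilon> \<chi> \<xi> = (1 / of_nat n) *
     sum_classes G (\<lambda>x. \<Sum>d\<in>{d. d dvd n}.
        of_int (\<epsilon> d x) * cyc_trace (n div d) (\<chi> x * inverse \<xi> ^ d))"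

definition VPA :: "('g, 'b) monoid_scheme \<Rightarrow> nat \<Rightarrow> (nat \<Rightarrow> 'g \<Rightarrow> int) \<Rightarrow> bool" where
  "VPA G n \<epsilon> \<longleftrightarrow>
     (\<forall>d. d dvd n \<longrightarrow> class_function G (\<epsilon> d)) \<and>
     (\<forall>d. d dvd n \<longrightarrow> sum_classes G (\<epsilon> d) = 1) \<and>
     (\<forall>d. d dvd n \<longrightarrow> d \<noteq> n \<longrightarrow> \<epsilon> d \<one>\<^bsub>G\<^esub> = 0) \<and>
     (\<forall>d. d dvd n \<longrightarrow> (\<forall>x\<in>carrier G. \<not> group.ord G x dvd (n div d) \<longrightarrow> \<epsilon> d x = 0)) \<and>
     (\<forall>\<xi>::complex. \<xi> ^ n = 1 \<longrightarrow>
        (\<forall>\<chi>. ordinary_char G \<chi> \<longrightarrow> mu G n \<epsilon> \<chi> \<xi> \<in> \<nat>) \<and>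
        (\<forall>p \<chi>. prime p \<and> \<not> p dvd n \<and> brauer_char G p \<chi> \<longrightarrow> mu G n \<epsilon> \<chi> \<xi> \<in> \<nat>))"

definition vpa_pow :: "nat \<Rightarrow> nat \<Rightarrow> (nat \<Rightarrow> 'g \<Rightarrow> int) \<Rightarrow> (nat \<Rightarrow> 'g \<Rightarrow> int)" where
  "vpa_pow n m \<epsilon> = (\<lambda>d g. \<epsilon> (d * (n div m)) g)"

end

theory Submission
  imports Defs "Berlekamp_Zassenhaus.Factor_Bound"
begin


lemma freshman:
  fixes A B :: "'a::comm_ring_1"
  assumes p: "prime p"
  shows "of_nat p dvd ((A + B)^p - (A^p + B^p))"
proof -
  have p0: "p > 0" using p prime_gt_0_nat by blast
  have set: "{..p} = insert 0 (insert p {0<..<p})" using p0 by auto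
  have "(A+B)^p = (\<Sum>k\<le>p. of_nat (p choose k) * A^k * B^(p-k))"
    by (rule binomial_ring)
  also have "\<dots> = B^p + (A^p + (\<Sum>k\<in>{0<..<p}. of_nat (p choose k) * A^k * B^(p-k)))"
    unfolding set using p0 by (subst sum.insert; simp)+
  finally have eq: "(A + B)^p - (A^p + B^p) = (\<Sum>k\<in>{0<..<p}. of_nat (p choose k) * A^k * B^(p-k))"
    by (simp add: algebra_simps)
  have "of_nat p dvd (\<Sum>k\<in>{0<..<p}. of_nat (p choose k) * A^k * B^(p-k))"
  proof (rule dvd_sum)
    fix k assume "k \<in> {0<..<p}"
    then have "p dvd (p choose k)" using p by (intro dvd_choose_prime) auto
    then obtain c where "p choose k = p * c" by blast
    then show "of_nat p dvd of_nat (p choose k) * A^k * B^(p-k)"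
      by (simp add: mult.assoc)
  qed
  then show ?thesis using eq by simp
qed

lemma fermat_nat_aux:
  assumes p: "prime p"
  shows "int p dvd (int a)^p - int a"
proof (induction a)
  case 0
  then show ?case using p prime_gt_0_nat by (simp add: zero_power)
next
  case (Suc a)
  have "(int (Suc a))^p - int (Suc a) = ((int a + 1)^p - ((int a)^p + 1^p)) + ((int a)^p - int a)"
    by (simp add: add.commute)
  moreover have "int p dvd ((int a + 1)^p - ((int a)^p + 1^p))"
    using freshman[OF p, of "int a" 1] by simp
  ultimately show ?case using Suc by (metis dvd_add)
qed

lemma fermat_int:
  fixes a :: int
  assumes p: "prime p"
  shows "int p dvd a^p - a"
proof -
  have pp: "int p > 0" using p prime_gt_0_nat by simp
  define b where "b = a mod int p"
  have b0: "b \<ge> 0" using pp b_def by simp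
  have "int p dvd b^p - b" using fermat_nat_aux[OF p, of "nat b"] b0 by simp
  hence "(b^p - b) mod int p = 0" by simp
  hence "((a mod int p)^p mod int p - a mod int p) mod int p = 0"
    unfolding b_def by (simp add: mod_diff_left_eq)
  hence "(a^p - a) mod int p = 0" by (simp add: power_mod mod_diff_eq)
  thus ?thesis by (simp add: dvd_eq_mod_eq_0)
qed

lemma frob_aux:
  fixes a x g G :: "'a::comm_ring_1"
  shows "(a + x*g)^p - (a + x^p*G) = ((a + x*g)^p - (a^p + (x*g)^p)) + (a^p - a) + x^p*(g^p - G)"
  by (simp add: algebra_simps power_mult_distrib)

lemma frob:
  fixes g :: "int poly"
  assumes p: "prime p"
  shows "[:int p:] dvd (g^p - pcompose g ([:0,1:]^p))"
proof (induction g rule: pCons_induct)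
  case 0
  then show ?case using p prime_gt_0_nat by (simp add: zero_power)
next
  case (pCons a g)
  let ?X = "[:0,1:] :: int poly"
  let ?G = "pcompose g (?X^p)"
  have e1: "pCons a g = [:a:] + ?X * g"
    by (metis add_pCons pCons_0_as_mult add.right_neutral add_0)
  have e2: "pcompose (pCons a g) (?X^p) = [:a:] + ?X^p * ?G"
    by (simp add: pcompose_pCons)
  have "(pCons a g)^p - pcompose (pCons a g) (?X^p) =
     (([:a:] + ?X * g)^p - ([:a:]^p + (?X*g)^p)) + ([:a:]^p - [:a:]) + ?X^p * (g^p - ?G)"
  proof -
    have h1: "(pCons a g)^p = ([:a:] + ?X*g)^p" by (simp only: e1)
    have "(pCons a g)^p - pcompose (pCons a g) (?X^p) = ([:a:] + ?X*g)^p - ([:a:] + ?X^p * ?G)"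
      by (simp only: e2 h1)
    then show ?thesis by (simp only: frob_aux)
  qed
  moreover have "[:int p:] dvd (([:a:] + ?X * g)^p - ([:a:]^p + (?X*g)^p))"
    using freshman[OF p, of "[:a:]" "?X * g"] by (simp add: of_nat_poly)
  moreover have "[:int p:] dvd ([:a:]^p - [:a:])"
    proof -
    have "[:a:]^p - [:a:] = [:a^p - a:]" by (simp add: Polynomial.poly_const_pow)
    then show ?thesis using fermat_int[OF p, of a] by (simp add: const_poly_dvd_const_poly_iff)
  qed
  moreover have "[:int p:] dvd ?X^p * (g^p - ?G)" using pCons by simp
  ultimately show ?case by (metis dvd_add)
qed


lemma not_dvd_monic:
  fixes f S :: "int poly"
  assumes p: "prime p" and mf: "monic f" and df: "degree f \<ge> 1"
  shows "\<not> [:int p:] dvd (1 - f * S)"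
proof
  assume "[:int p:] dvd (1 - f * S)"
  hence c: "\<And>i. int p dvd coeff (1 - f*S) i" by (simp add: const_poly_dvd_iff)
  have "p \<noteq> 1" using p by auto
  hence np1: "\<not> int p dvd 1" by simp
  show False
  proof (cases "\<forall>i. int p dvd coeff S i")
    case True
    have "coeff (f*S) 0 = coeff f 0 * coeff S 0" by (simp add: coeff_mult)
    hence "coeff (1 - f*S) 0 = 1 - coeff f 0 * coeff S 0" by (simp add: coeff_diff)
    hence "int p dvd 1 - coeff f 0 * coeff S 0" using c[of 0] by simp
    moreover have "int p dvd coeff f 0 * coeff S 0" using True by simp
    ultimately have "int p dvd (1 - coeff f 0 * coeff S 0) + coeff f 0 * coeff S 0"
      by (rule dvd_add)
    hence "int p dvd 1" by simp
    with np1 show False by simp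
  next
    case False
    define A where "A = {i. \<not> int p dvd coeff S i}"
    have Asub: "A \<subseteq> {..degree S}"
    proof
      fix i assume "i \<in> A"
      then have "coeff S i \<noteq> 0" unfolding A_def by auto
      then show "i \<in> {..degree S}" by (simp add: le_degree)
    qed
    have finA: "finite A" using Asub finite_subset by blast
    have Ane: "A \<noteq> {}" using False A_def by auto
    define s where "s = Max A"
    have sA: "s \<in> A" using finA Ane s_def by simp
    have sbig: "int p dvd coeff S i" if "i > s" for i
    proof (rule ccontr)
      assume "\<not> int p dvd coeff S i"
      hence "i \<in> A" unfolding A_def by simp
      hence "i \<le> s" unfolding s_def using finA by simp
      with that show False by simp
    qed
    define d where "d = degree f"
    define n where "n = s + d"
    have dn: "d \<in> {..n}" by (simp add: n_def)
    have "coeff (f*S) n = (\<Sum>i\<le>n. coeff f i * coeff S (n - i))" by (simp add: coeff_mult)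
    also have "\<dots> = coeff f d * coeff S (n - d) + (\<Sum>i\<in>{..n} - {d}. coeff f i * coeff S (n - i))"
      by (rule sum.remove[OF _ dn]) simp
    finally have eq0: "coeff (f*S) n = coeff f d * coeff S (n - d) + (\<Sum>i\<in>{..n} - {d}. coeff f i * coeff S (n - i))" .
    have "coeff f d = 1" using mf d_def by simp
    moreover have "n - d = s" by (simp add: n_def)
    ultimately have eq: "coeff (f*S) n = coeff S s + (\<Sum>i\<in>{..n} - {d}. coeff f i * coeff S (n - i))"
      using eq0 by simp
    have "int p dvd (\<Sum>i\<in>{..n} - {d}. coeff f i * coeff S (n - i))"
    proof (rule dvd_sum)
      fix i assume i: "i \<in> {..n} - {d}"
      show "int p dvd coeff f i * coeff S (n - i)"
      proof (cases "i < d")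
        case True
        then have "n - i > s" using n_def by auto
        then show ?thesis using sbig by simp
      next
        case False
        then have "i > d" using i by auto
        then have "coeff f i = 0" using d_def coeff_eq_0 by blast
        then show ?thesis by simp
      qed
    qed
    moreover have "n \<noteq> 0" using df by (simp add: n_def d_def)
    hence "coeff (1 - f*S) n = - coeff (f*S) n" by (simp add: coeff_diff coeff_1)
    hence "int p dvd coeff (f*S) n" using c[of n] by simp
    ultimately have "int p dvd coeff (f*S) n - (\<Sum>i\<in>{..n} - {d}. coeff f i * coeff S (n - i))"
      by (simp add: dvd_diff)
    moreover have "coeff (f*S) n - (\<Sum>i\<in>{..n} - {d}. coeff f i * coeff S (n - i)) = coeff S s"
      using eq by simp
    ultimately have "int p dvd coeff S s" by simp
    then show False using sA A_def by simp
  qed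
qed

lemma powsplit:
  fixes a b f :: "'a::comm_ring_1"
  shows "\<exists>c. (a + f*b)^n = a^n + f * c"
proof (induction n)
  case 0
  then show ?case by (rule exI[of _ 0]) simp
next
  case (Suc n)
  then obtain c where c: "(a + f*b)^n = a^n + f * c" by blast
  have "(a + f*b)^Suc n = (a^n + f*c) * (a + f*b)" by (simp only: power_Suc2 c)
  also have "\<dots> = a^Suc n + f * (c * a + a^n * b + f * c * b)"
    by (simp add: algebra_simps)
  finally have "(a + f*b)^Suc n = a^Suc n + f * (c * a + a^n * b + f * c * b)" .
  then show ?case by blast
qed

lemma diff_dvd_power_diff:
  fixes a b :: "'a::comm_ring_1"
  shows "(a - b) dvd (a^n - b^n)"
proof (induction n)
  case 0 then show ?case by simp
next
  case (Suc n)
  have "a^Suc n - b^Suc n = a*(a^n - b^n) + (a - b)*b^n" by (simp add: algebra_simps)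
  then show ?case using Suc by simp
qed



lemma modp_contra:
  fixes f g h W :: "int poly"
  assumes p: "prime p" and pk: "\<not> p dvd k" and k: "k > 0" and mf: "monic f" and df: "degree f \<ge> 1"
    and fgh: "f * g * h = [:0,1:]^k - 1" and gW: "pcompose g ([:0,1:]^p) = f * W"
  shows False
proof -
  let ?X = "[:0,1:] :: int poly"
  define F where "F = ?X^k - 1"
  have pd: "?X * pderiv F = smult (int k) F + [:int k:]"
  proof -
    have "pderiv F = smult (of_nat k) (?X^(k-1))" by (simp add: F_def pderiv_diff pderiv_power pderiv_pCons)
    moreover have "?X * ?X^(k-1) = ?X^k" using k by (cases k) (simp_all only: power_Suc, simp)
    ultimately have "?X * pderiv F = smult (int k) (?X^k)" by (simp only: mult_smult_right of_nat_eq)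
    also have "?X^k = F + 1" by (simp add: F_def)
    finally show ?thesis by (simp add: smult_add_right)
  qed
  have "coprime k p" using p pk prime_imp_coprime[of p k] by (simp add: ac_simps)
  hence "gcd (int k) (int p) = 1" by (simp add: gcd_int_def)
  then obtain u v where uv: "u * int k + v * int p = 1"
    using bezout_coefficients_fst_snd[of "int k" "int p"] by metis
  have FF: "F = f * g * h" using fgh F_def by simp
  define E where "E = smult u (?X * pderiv F) - smult (u * int k) F"
  have E1: "1 - E = [:int p:] * [:v:]"
  proof -
    have "E = [:u * int k:]" unfolding E_def pd by (simp add: smult_add_right)
    also have "u * int k = 1 - v * int p" using uv by simp
    finally show ?thesis by (simp add: algebra_simps)
  qed
  define U where "U = smult u (?X * pderiv f * h) - smult (u * int k) (f*h)"
  define V where "V = smult u (?X * (g * pderiv h + pderiv g * h))"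
  have EUV: "E = g * U + f * V"
    unfolding E_def U_def V_def FF
    by (simp add: pderiv_mult algebra_simps smult_add_right)
  obtain c where c: "E^p = (g*U)^p + f * c"
    using powsplit[of "g*U" f V p] EUV by (auto simp: ac_simps)
  have d1: "[:int p:] dvd 1 - E^p"
    using diff_dvd_power_diff[of 1 E p] E1 by (metis dvd_trans dvd_triv_left power_one)
  have d2: "[:int p:] dvd (g^p - pcompose g (?X^p)) * U^p"
    using frob[OF p, of g] by simp
  have eqS: "1 - f * (W * U^p + c) = (1 - E^p) + (g^p - pcompose g (?X^p)) * U^p"
    unfolding c gW by (simp add: algebra_simps power_mult_distrib)
  have "[:int p:] dvd 1 - f * (W * U^p + c)" unfolding eqS by (rule dvd_add[OF d1 d2])
  with not_dvd_monic[OF p mf df] show False by blast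
qed



lemma xk_monic:
  assumes k: "k > 0"
  shows "degree ([:0,1:]^k - 1 :: 'a::{comm_ring_1,ring_no_zero_divisors} poly) = k"
    and "lead_coeff ([:0,1:]^k - 1 :: 'a::{comm_ring_1,ring_no_zero_divisors} poly) = 1"
proof -
  have e: "([:0,1:]^k - 1 :: 'a poly) = monom 1 k + (-1)" by (simp add: monom_altdef)
  have d: "degree (monom (1::'a) k + (-1)) = k"
    using k by (subst degree_add_eq_left) (auto simp: degree_monom_eq)
  show "degree ([:0,1:]^k - 1 :: 'a poly) = k" using d e by simp
  show "lead_coeff ([:0,1:]^k - 1 :: 'a poly) = 1" using d e k by simp
qed

lemma mpr_diff: "map_poly (of_rat :: rat \<Rightarrow> complex) (p - q) = map_poly of_rat p - map_poly of_rat q"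
  by (rule poly_eqI) (simp add: coeff_map_poly of_rat_diff)

lemma mpr_mult: "map_poly (of_rat :: rat \<Rightarrow> complex) (p * q) = map_poly of_rat p * map_poly of_rat q"
  by (induct p rule: pCons_induct)
     (simp_all add: mult_pCons_left of_rat_hom.map_poly_hom_add of_rat_hom.map_poly_hom_smult of_rat_hom.map_poly_pCons_hom)

lemma minpoly_ex:
  fixes w :: complex
  assumes wk: "w^k = 1" and k: "k > 0"
  shows "\<exists>f::rat poly. monic f \<and> poly (map_poly of_rat f) w = 0 \<and>
           (\<forall>r. poly (map_poly of_rat r) w = 0 \<longrightarrow> f dvd r)"
proof -
  define P where "P r \<longleftrightarrow> r \<noteq> 0 \<and> poly (map_poly of_rat r) w = 0" for r :: "rat poly"
  have "P ([:0,1:]^k - 1)"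
  proof -
    have "degree ([:0,1:]^k - 1 :: rat poly) = k" using xk_monic(1)[OF k] .
    hence "([:0,1:]^k - 1 :: rat poly) \<noteq> 0" using k by auto
    moreover have "map_poly of_rat ([:0,1:]^k - 1 :: rat poly) = ([:0,1:]^k - 1 :: complex poly)"
    proof -
      have "map_poly of_rat (monom 1 k - 1 :: rat poly) = (monom 1 k - 1 :: complex poly)"
        by (rule poly_eqI) (simp add: coeff_map_poly coeff_monom of_rat_diff coeff_1)
      thus ?thesis by (simp add: monom_altdef)
    qed
    ultimately show ?thesis unfolding P_def using wk by simp
  qed
  then obtain f0 where Pf0: "P f0" and least: "\<And>y. P y \<Longrightarrow> degree f0 \<le> degree y"
    using ex_has_least_nat[of P _ degree] by metis
  define f where "f = smult (inverse (lead_coeff f0)) f0"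
  have f00: "f0 \<noteq> 0" using Pf0 P_def by simp
  have mf: "monic f" using f00 by (simp add: f_def)
  have df: "degree f = degree f0" using f00 by (simp add: f_def)
  have rootf: "poly (map_poly of_rat f) w = 0" using Pf0 by (simp add: f_def P_def hom_distribs)
  have "f dvd r" if r: "poly (map_poly of_rat r) w = 0" for r
  proof -
    have fn0: "f \<noteq> 0" using mf by auto
    have "r mod f = 0"
    proof (rule ccontr)
      assume nz: "r mod f \<noteq> 0"
      have "r mod f = r - (r div f) * f" by (simp add: minus_div_mult_eq_mod)
      hence "poly (map_poly of_rat (r mod f)) w = 0" using r rootf by (simp add: mpr_diff mpr_mult)
      hence "P (r mod f)" using nz P_def by simp
      hence "degree f0 \<le> degree (r mod f)" by (rule least)
      moreover have "degree (r mod f) < degree f" using degree_mod_less[OF fn0] nz by auto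
      ultimately show False using df by simp
    qed
    thus ?thesis by (simp add: mod_eq_0_iff_dvd)
  qed
  thus ?thesis using mf rootf by blast
qed

lemma minpoly_factor:
  fixes f a b :: "rat poly"
  assumes mf: "monic f" and minp: "\<forall>r. poly (map_poly of_rat r) z = 0 \<longrightarrow> f dvd r"
    and fab: "f = a * b" and ra: "poly (map_poly of_rat a) (z::complex) = 0"
  shows "degree b = 0"
proof -
  have fn0: "f \<noteq> 0" using mf by auto
  hence a0: "a \<noteq> 0" and b0: "b \<noteq> 0" using fab by auto
  have "f dvd a" using minp ra by blast
  hence "degree f \<le> degree a" using a0 by (simp add: dvd_imp_degree_le)
  moreover have "degree f = degree a + degree b" using fab a0 b0 by (simp add: degree_mult_eq)
  ultimately show ?thesis by simp
qed

lemma monic_dvd_int: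
  fixes u :: "rat poly" and Fi :: "int poly"
  assumes mu: "monic u" and mF: "monic Fi" and d: "u dvd map_poly of_int Fi"
  shows "\<exists>ui. u = map_poly of_int ui"
proof -
  obtain v where eq: "map_poly of_int Fi = u * v" using d by blast
  obtain r rg where rr: "rat_to_normalized_int_poly u = (r, rg)" by force
  from rat_to_int_factor_explicit[OF eq rr] obtain r' where Fe: "Fi = rg * smult (content Fi) r'" by blast
  from rat_to_normalized_int_poly[OF rr] have u: "u = smult r (map_poly of_int rg)" and r0: "r > 0" by auto
  have "lead_coeff Fi = lead_coeff (rg * smult (content Fi) r')" by (rule arg_cong[OF Fe])
  also have "\<dots> = lead_coeff rg * lead_coeff (smult (content Fi) r')"
    by (rule lead_coeff_mult)
  also have "\<dots> = lead_coeff rg * (content Fi * lead_coeff r')"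
    by (simp only: lead_coeff_smult)
  finally have "1 = lead_coeff rg * (content Fi * lead_coeff r')"
    using mF by simp
  hence l: "lead_coeff rg = 1 \<or> lead_coeff rg = -1" by (metis zmult_eq_1_iff)
  have "lead_coeff u = lead_coeff (smult r (map_poly of_int rg))" by (rule arg_cong[OF u])
  also have "\<dots> = r * of_int (lead_coeff rg)"
    by (simp only: lead_coeff_smult of_int_hom.degree_map_poly_hom coeff_map_poly of_int_0)
  finally have "1 = r * of_int (lead_coeff rg)" using mu by simp
  with l r0 have "lead_coeff rg = 1 \<and> r = 1" by auto
  thus ?thesis using u by auto
qed

lemma monic_div_int:
  fixes W :: "rat poly" and fi Ai :: "int poly"
  assumes mf: "monic fi" and eq: "map_poly of_int Ai = map_poly of_int fi * W"
  shows "\<exists>Wi. W = map_poly of_int Wi"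
proof -
  obtain q r where qr: "pseudo_divmod Ai fi = (q, r)" by force
  have f0: "fi \<noteq> 0" using mf by auto
  have Aeq: "Ai = fi * q + r" using pseudo_divmod(1)[OF f0 qr] mf by simp
  have rdeg: "r = 0 \<or> degree r < degree fi" using pseudo_divmod(2)[OF f0 qr] .
  let ?m = "map_poly (of_int :: int \<Rightarrow> rat)"
  have "?m Ai = ?m fi * ?m q + ?m r" unfolding Aeq by (simp only: hom_distribs)
  hence "?m fi * W = ?m fi * ?m q + ?m r" using eq by simp
  hence eqr: "?m fi * (W - ?m q) = ?m r" by (simp add: right_diff_distrib)
  have "W = ?m q"
  proof (rule ccontr)
    assume ne: "W \<noteq> ?m q"
    have mf0: "?m fi \<noteq> 0" using f0 by simp
    have nz: "W - ?m q \<noteq> 0" using ne by simp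
    have "?m fi * (W - ?m q) \<noteq> 0" using mf0 nz by simp
    hence r0: "r \<noteq> 0" unfolding eqr by simp
    have "degree (?m fi * (W - ?m q)) = degree (?m fi) + degree (W - ?m q)"
      using mf0 nz by (rule degree_mult_eq)
    hence "degree (?m r) \<ge> degree fi" unfolding eqr by simp
    hence "degree r \<ge> degree fi" by simp
    with rdeg r0 show False by simp
  qed
  thus ?thesis by blast
qed



lemma mp_X: fixes \<phi> :: "'a::comm_ring_1 \<Rightarrow> 'b::comm_ring_1"
  assumes "\<phi> 0 = 0" "\<phi> 1 = 1"
  shows "map_poly \<phi> ([:0,1:]^j) = [:0,1:]^j"
proof -
  have "([:0,1:]^j :: 'a poly) = monom 1 j" by (simp add: monom_altdef)
  moreover have "([:0,1:]^j :: 'b poly) = monom 1 j" by (simp add: monom_altdef)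
  ultimately show ?thesis using assms by (simp add: map_poly_monom)
qed

lemma mpr_X: "map_poly (of_rat :: rat \<Rightarrow> complex) ([:0,1:]^j) = [:0,1:]^j"
  by (rule mp_X) simp_all

lemma mpi_X: "map_poly (of_int :: int \<Rightarrow> rat) ([:0,1:]^j) = [:0,1:]^j"
  by (rule mp_X) simp_all

lemma mpr_root_dvd:
  fixes f r :: "rat poly"
  assumes "f dvd r" "poly (map_poly of_rat f) (z::complex) = 0"
  shows "poly (map_poly of_rat r) z = 0"
proof -
  obtain t where "r = f * t" using assms(1) by blast
  then show ?thesis using assms(2) by (simp add: mpr_mult)
qed

lemma unit_no_root:
  fixes f :: "rat poly"
  assumes "is_unit f"
  shows "poly (map_poly of_rat f) (z::complex) \<noteq> 0"
proof
  assume h: "poly (map_poly of_rat f) z = 0"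
  have "poly (map_poly of_rat (1::rat poly)) z = 0" using mpr_root_dvd[OF assms h] .
  then show False by simp
qed

lemma gal_prime:
  fixes w :: complex and r :: "rat poly"
  assumes k: "k > 0" and wk: "w^k = 1" and p: "prime p" and pk: "\<not> p dvd k"
    and rw: "poly (map_poly of_rat r) w = 0"
  shows "poly (map_poly of_rat r) (w^p) = 0"
proof -
  let ?mp = "map_poly (of_rat :: rat \<Rightarrow> complex)"
  let ?mi = "map_poly (of_int :: int \<Rightarrow> rat)"
  obtain f where mf: "monic f" and rf: "poly (?mp f) w = 0"
    and minf: "\<forall>r. poly (?mp r) w = 0 \<longrightarrow> f dvd r" using minpoly_ex[OF wk k] by blast
  have wpk: "(w^p)^k = 1"
  proof -
    have "(w^p)^k = (w^k)^p" by (simp only: power_mult[symmetric] mult.commute)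
    thus ?thesis using wk by simp
  qed
  obtain g where mg: "monic g" and rg: "poly (?mp g) (w^p) = 0"
    and ming: "\<forall>r. poly (?mp r) (w^p) = 0 \<longrightarrow> g dvd r" using minpoly_ex[OF wpk k] by blast
  have f0: "f \<noteq> 0" using mf by auto
  have g0: "g \<noteq> 0" using mg by auto
  have df: "degree f \<ge> 1"
  proof (rule ccontr)
    assume "\<not> degree f \<ge> 1"
    hence "is_unit f" using f0 is_unit_iff_degree by auto
    with unit_no_root rf show False by blast
  qed
  have key: "poly (?mp f) (w^p) = 0"
  proof (rule ccontr)
    assume nf: "poly (?mp f) (w^p) \<noteq> 0"
    have cop: "algebraic_semidom_class.coprime f g"
    proof (rule algebraic_semidom_class.coprimeI)
      fix c assume cf: "c dvd f" and cg: "c dvd g"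
      obtain u where fu: "f = c * u" using cf by blast
      have "poly (?mp c) w * poly (?mp u) w = 0" using rf fu by (simp add: mpr_mult)
      hence "poly (?mp c) w = 0 \<or> poly (?mp u) w = 0" by simp
      thus "is_unit c"
      proof
        assume "poly (?mp c) w = 0"
        hence "f dvd c" using minf by blast
        hence "f dvd g" using cg by (rule dvd_trans)
        then obtain t where gt: "g = f * t" by blast
        have "poly (?mp f) (w^p) * poly (?mp t) (w^p) = 0" using rg gt by (simp add: mpr_mult)
        hence "poly (?mp t) (w^p) = 0" using nf by simp
        moreover have "g = t * f" using gt by (simp add: mult.commute)
        ultimately have "degree f = 0" using minpoly_factor[OF mg ming] by blast
        with df show "is_unit c" by simp
      next
        assume "poly (?mp u) w = 0"
        moreover have "f = u * c" using fu by (simp add: mult.commute)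
        ultimately have "degree c = 0" using minpoly_factor[OF mf minf] by blast
        moreover have "c \<noteq> 0" using fu f0 by auto
        ultimately show "is_unit c" using is_unit_iff_degree by blast
      qed
    qed
    define Fr where "Fr = ([:0,1:]^k - 1 :: rat poly)"
    define Fi where "Fi = ([:0,1:]^k - 1 :: int poly)"
    have mFi: "monic Fi" unfolding Fi_def using xk_monic(2)[OF k] .
    have FiFr: "?mi Fi = Fr" unfolding Fi_def Fr_def of_int_poly_hom.hom_minus mpi_X by simp
    have mpFr: "?mp Fr = [:0,1:]^k - 1" unfolding Fr_def mpr_diff mpr_X by simp
    have "poly (?mp Fr) w = 0" unfolding mpFr using wk by simp
    hence fFr: "f dvd Fr" using minf by blast
    have "poly (?mp Fr) (w^p) = 0" unfolding mpFr using wpk by simp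
    hence gFr: "g dvd Fr" using ming by blast
    have "f * g dvd Fr" by (rule divides_mult[OF fFr gFr cop])
    then obtain h where Fh: "Fr = f * g * h" by blast
    have lFr: "lead_coeff Fr = 1" using xk_monic(2)[OF k] unfolding Fr_def .
    have "lead_coeff Fr = lead_coeff f * lead_coeff g * lead_coeff h"
      unfolding Fh by (simp only: lead_coeff_mult)
    hence mh: "monic h" using lFr mf mg by simp
    have hFr: "h dvd Fr" using Fh by simp
    obtain fi where fi: "f = ?mi fi" using monic_dvd_int[OF mf mFi] fFr FiFr by blast
    obtain gi where gi: "g = ?mi gi" using monic_dvd_int[OF mg mFi] gFr FiFr by blast
    obtain hi where hi: "h = ?mi hi" using monic_dvd_int[OF mh mFi] hFr FiFr by blast
    define G where "G = pcompose g ([:0,1:]^p)"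
    have "?mp G = pcompose (?mp g) ([:0,1:]^p)"
      unfolding G_def of_rat_hom.map_poly_pcompose mpr_X ..
    hence "poly (?mp G) w = 0" using rg by (simp add: poly_pcompose)
    hence "f dvd G" using minf by blast
    then obtain W where GW: "G = f * W" by blast
    have GA: "G = ?mi (pcompose gi ([:0,1:]^p))"
      unfolding G_def gi of_int_hom.map_poly_pcompose mpi_X ..
    have mfi: "monic fi"
    proof -
      have "lead_coeff f = of_int (lead_coeff fi)" using fi by simp
      thus ?thesis using mf by simp
    qed
    have "?mi (pcompose gi ([:0,1:]^p)) = ?mi fi * W" using GA GW fi by simp
    then obtain Wi where Wi: "W = ?mi Wi" using monic_div_int[OF mfi] by blast
    have "?mi (fi * gi * hi) = ?mi Fi" using Fh FiFr fi gi hi by (simp add: hom_distribs)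
    hence fgh: "fi * gi * hi = [:0,1:]^k - 1" unfolding Fi_def by (simp only: of_int_poly_hom.eq_iff)
    have "?mi (pcompose gi ([:0,1:]^p)) = ?mi (fi * Wi)" using GA GW fi Wi by (simp add: hom_distribs)
    hence gW: "pcompose gi ([:0,1:]^p) = fi * Wi" by (simp only: of_int_poly_hom.eq_iff)
    have dfi: "degree fi = degree f" using fi by simp
    show False using modp_contra[OF p pk k mfi _ fgh gW] df dfi by simp
  qed
  have "f dvd r" using minf rw by blast
  then show ?thesis using key by (rule mpr_root_dvd)
qed



lemma gal_coprime:
  fixes w :: complex and r :: "rat poly"
  assumes k: "k > 0" and wk: "w^k = 1"
    and rw: "poly (map_poly of_rat r) w = 0"
  shows "j > 0 \<Longrightarrow> algebraic_semidom_class.coprime j k \<Longrightarrow> poly (map_poly of_rat r) (w^j) = 0"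
proof (induction j rule: less_induct)
  case (less j)
  show ?case
  proof (cases "j = 1")
    case True
    then show ?thesis using rw by simp
  next
    case False
    then obtain p where p: "prime p" and pj: "p dvd j" using prime_factor_nat by blast
    then obtain j' where jj: "j = p * j'" by blast
    have j'0: "j' > 0" using jj less.prems(1) by (cases j') auto
    have p1: "p > 1" using p prime_gt_1_nat by blast
    have lt: "j' < j" using jj p1 j'0 by simp
    have cj': "algebraic_semidom_class.coprime j' k" using less.prems(2) jj by simp
    have pk: "\<not> p dvd k"
    proof
      assume "p dvd k"
      hence "p dvd gcd j k" using pj by simp
      moreover have "gcd j k = 1" using less.prems(2) by simp
      ultimately show False using p1 by simp
    qed
    have IH: "poly (map_poly of_rat r) (w^j') = 0" using less.IH[OF lt j'0 cj'] .
    have wj'k: "(w^j')^k = 1"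
    proof -
      have "(w^j')^k = (w^k)^j'" by (simp only: power_mult[symmetric] mult.commute)
      thus ?thesis using wk by simp
    qed
    have "poly (map_poly of_rat r) ((w^j')^p) = 0" using gal_prime[OF k wj'k p pk IH] .
    moreover have "(w^j')^p = w^j" using jj by (simp add: power_mult[symmetric] mult.commute)
    ultimately show ?thesis by simp
  qed
qed

lemma zeta_pow: "zeta k ^ j = cis (2 * pi * real j / real k)"
  unfolding zeta_def by (simp add: DeMoivre field_simps)

lemma zeta_pow_k: "k > 0 \<Longrightarrow> zeta k ^ k = 1"
  unfolding zeta_pow by (simp add: complex_eq_iff)

lemma zeta_1: "zeta 1 = 1"
  unfolding zeta_def by (simp add: complex_eq_iff)

lemma root_unity_zeta:
  assumes k: "k > 0" and wk: "(w::complex)^k = 1"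
  shows "\<exists>s<k. w = zeta k ^ s"
proof -
  have "w \<in> (\<lambda>j. cis (2 * pi * real j / real k)) ` {..<k}"
    using bij_betw_roots_unity[OF k] wk unfolding bij_betw_def by auto
  then show ?thesis by (auto simp: zeta_pow)
qed



lemma cyc_trace_eval:
  assumes k: "k > 0" and P: "poly (map_poly of_rat P) (zeta k) = a"
  shows "cyc_trace k a = (\<Sum>j\<in>{j. j < k \<and> algebraic_semidom_class.coprime j k}. poly (map_poly of_rat P) (zeta k ^ j))"
proof -
  have inf: "in_cyc_field k a" unfolding in_cyc_field_def using P by blast
  define p0 where "p0 = (SOME p :: rat poly. poly (map_poly of_rat p) (zeta k) = a)"
  have ex: "\<exists>p :: rat poly. poly (map_poly of_rat p) (zeta k) = a" using P by blast
  have p0: "poly (map_poly of_rat p0) (zeta k) = a" unfolding p0_def by (rule someI_ex[OF ex])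
  have eq: "poly (map_poly of_rat p0) (zeta k ^ j) = poly (map_poly of_rat P) (zeta k ^ j)"
    if j: "j \<in> {j. j < k \<and> algebraic_semidom_class.coprime j k}" for j
  proof (cases "j = 0")
    case True
    then have "k = 1" using j by simp
    then have "zeta k = 1" using zeta_1 by simp
    then have "zeta k ^ j = zeta k" using True by simp
    then show ?thesis using p0 P by simp
  next
    case False
    have "poly (map_poly of_rat (p0 - P)) (zeta k) = 0" using p0 P by (simp add: mpr_diff)
    from gal_coprime[OF k zeta_pow_k[OF k] this] j False
    have "poly (map_poly of_rat (p0 - P)) (zeta k ^ j) = 0" by simp
    then show ?thesis by (simp add: mpr_diff)
  qed
  have "cyc_trace k a = (\<Sum>j\<in>{j. j < k \<and> algebraic_semidom_class.coprime j k}. poly (map_poly of_rat p0) (zeta k ^ j))"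
    unfolding cyc_trace_def if_P[OF inf] Let_def p0_def[symmetric] ..
  also have "\<dots> = (\<Sum>j\<in>{j. j < k \<and> algebraic_semidom_class.coprime j k}. poly (map_poly of_rat P) (zeta k ^ j))"
    by (rule sum.cong[OF refl eq])
  finally show ?thesis .
qed



definition JJ :: "nat \<Rightarrow> nat set" where
  "JJ k = {j. j < k \<and> algebraic_semidom_class.coprime j k}"

lemma trace_root_mult:
  assumes k: "k > 0" and P: "poly (map_poly of_rat P) (zeta k) = a" and wk: "w^k = 1"
  shows "cyc_trace k (a * w) = (\<Sum>j\<in>JJ k. poly (map_poly of_rat P) (zeta k ^ j) * w^j)"
proof -
  obtain s where s: "w = zeta k ^ s" using root_unity_zeta[OF k wk] by blast
  have "poly (map_poly of_rat (P * monom 1 s)) (zeta k) = a * w"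
    using P s by (simp add: mpr_mult of_rat_hom.map_poly_hom_monom poly_monom)
  from cyc_trace_eval[OF k this]
  have "cyc_trace k (a * w) = (\<Sum>j\<in>JJ k. poly (map_poly of_rat (P * monom 1 s)) (zeta k ^ j))"
    unfolding JJ_def .
  also have "\<dots> = (\<Sum>j\<in>JJ k. poly (map_poly of_rat P) (zeta k ^ j) * w^j)"
  proof (rule sum.cong[OF refl])
    fix j
    have "(zeta k ^ j) ^ s = w ^ j" unfolding s by (simp only: power_mult[symmetric] mult.commute)
    then show "poly (map_poly of_rat (P * monom 1 s)) (zeta k ^ j) = poly (map_poly of_rat P) (zeta k ^ j) * w^j"
      by (simp add: mpr_mult of_rat_hom.map_poly_hom_monom poly_monom)
  qed
  finally show ?thesis .
qed

lemma trace_not_field: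
  assumes k: "k > 0" and na: "\<not> in_cyc_field k a" and wk: "w^k = 1"
  shows "cyc_trace k (a * w) = 0"
proof -
  have "\<not> in_cyc_field k (a * w)"
  proof
    assume "in_cyc_field k (a * w)"
    then obtain Q where Q: "poly (map_poly of_rat Q) (zeta k) = a * w" unfolding in_cyc_field_def by blast
    have "(w^(k-1))^k = (w^k)^(k-1)" by (simp only: power_mult[symmetric] mult.commute)
    hence "(w^(k-1))^k = 1" using wk by simp
    then obtain s where s: "w^(k-1) = zeta k ^ s" using root_unity_zeta[OF k] by blast
    have "w * w^(k-1) = w^k" using k by (cases k) simp_all
    hence ww: "w * w^(k-1) = 1" using wk by simp
    have "poly (map_poly of_rat (Q * monom 1 s)) (zeta k) = a * w * w^(k-1)"
      using Q s by (simp add: mpr_mult of_rat_hom.map_poly_hom_monom poly_monom)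
    also have "\<dots> = a" using ww by (simp add: mult.assoc)
    finally show False using na unfolding in_cyc_field_def by blast
  qed
  then show ?thesis unfolding cyc_trace_def by simp
qed

lemma zeta_pow_eq_1:
  assumes q: "q > 0" and z: "zeta q ^ t = 1"
  shows "q dvd t"
proof -
  have "zeta q ^ t = zeta q ^ (t mod q)"
  proof -
    have tq: "q * (t div q) + t mod q = t" by simp
    have "zeta q ^ (q*(t div q) + t mod q) = (zeta q ^ q)^(t div q) * zeta q ^ (t mod q)"
      by (simp only: power_add power_mult)
    hence "zeta q ^ t = (zeta q ^ q)^(t div q) * zeta q ^ (t mod q)" unfolding tq .
    thus ?thesis using zeta_pow_k[OF q] by simp
  qed
  hence e: "cis (2 * pi * real (t mod q) / real q) = cis (2 * pi * real 0 / real q)"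
    using z by (simp add: zeta_pow)
  have "inj_on (\<lambda>k. cis (2 * pi * real k / real q)) {..<q}"
    using bij_betw_roots_unity[OF q] unfolding bij_betw_def by blast
  from inj_onD[OF this e] q have "t mod q = 0" by simp
  thus ?thesis by (simp add: dvd_eq_mod_eq_0)
qed

lemma sum_inv_pow:
  assumes q: "q > 0" and c: "(c::complex) \<noteq> 0"
  shows "(\<Sum>\<xi>\<in>{\<xi>. \<xi>^q = c}. inverse \<xi> ^ t) = (if q dvd t then of_nat q * inverse c ^ (t div q) else 0)"
proof -
  define c' where "c' = root q (norm c) * cis (Arg c / q)"
  have bij: "bij_betw (\<lambda>z. c' * z) {z. z ^ q = 1} {z. z ^ q = c}"
    unfolding c'_def by (rule bij_betw_nth_root_unity[OF c q])
  have c'q: "c'^q = c"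
  proof -
    have "c' * 1 \<in> (\<lambda>z. c' * z) ` {z. z^q = 1}" by (rule imageI) simp
    hence "c' * 1 \<in> {z. z^q = c}" using bij unfolding bij_betw_def by simp
    thus ?thesis by simp
  qed
  have "(\<Sum>\<xi>\<in>{\<xi>. \<xi>^q = c}. inverse \<xi> ^ t) = (\<Sum>z\<in>{z. z ^ q = 1}. inverse (c' * z) ^ t)"
    by (rule sum.reindex_bij_betw[OF bij, symmetric])
  also have "\<dots> = (\<Sum>s<q. inverse (c' * cis (2 * pi * real s / real q)) ^ t)"
    by (rule sum.reindex_bij_betw[OF bij_betw_roots_unity[OF q], symmetric])
  also have "\<dots> = (\<Sum>s<q. inverse c' ^ t * (inverse (zeta q) ^ t) ^ s)"
  proof (rule sum.cong[OF refl])
    fix s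
    have "inverse (c' * zeta q ^ s) ^ t = inverse c' ^ t * (inverse (zeta q) ^ t) ^ s"
      by (simp add: power_mult_distrib power_inverse[symmetric] power_mult[symmetric] mult.commute)
    then show "inverse (c' * cis (2 * pi * real s / real q)) ^ t = inverse c' ^ t * (inverse (zeta q) ^ t) ^ s"
      by (simp add: zeta_pow)
  qed
  also have "\<dots> = inverse c' ^ t * (\<Sum>s<q. (inverse (zeta q) ^ t) ^ s)"
    by (simp add: sum_distrib_left)
  also have "\<dots> = (if q dvd t then of_nat q * inverse c ^ (t div q) else 0)"
  proof (cases "q dvd t")
    case True
    then obtain u where u: "t = q * u" by blast
    have "inverse (zeta q) ^ t = (inverse (zeta q) ^ q) ^ u" unfolding u by (rule power_mult)
    also have "inverse (zeta q) ^ q = 1" by (simp add: power_inverse zeta_pow_k[OF q])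
    finally have "inverse (zeta q) ^ t = 1" by simp
    moreover have "inverse c' ^ t = inverse c ^ (t div q)"
    proof -
      have "inverse c' ^ t = (inverse c' ^ q) ^ u" unfolding u by (rule power_mult)
      also have "inverse c' ^ q = inverse c" using c'q by (simp add: power_inverse)
      finally show ?thesis using u q by simp
    qed
    ultimately show ?thesis using True by simp
  next
    case False
    define r where "r = inverse (zeta q) ^ t"
    have r1: "r \<noteq> 1"
    proof
      assume "r = 1"
      hence "inverse (zeta q ^ t) = 1" unfolding r_def by (simp only: power_inverse)
      hence "zeta q ^ t = 1" by (metis inverse_1 inverse_inverse_eq)
      with zeta_pow_eq_1[OF q] False show False by blast
    qed
    have "r^q = (inverse (zeta q) ^ q) ^ t" unfolding r_def by (simp only: power_mult[symmetric] mult.commute)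
    also have "inverse (zeta q) ^ q = 1" by (simp add: power_inverse zeta_pow_k[OF q])
    finally have rq: "r^q = 1" by simp
    have "(\<Sum>s<q. r ^ s) = (r^q - 1) / (r - 1)" using r1 by (rule geometric_sum)
    also have "\<dots> = 0" using rq by simp
    finally show ?thesis using False by (simp add: r_def)
  qed
  finally show ?thesis .
qed

lemma dvd_ej:
  fixes q e k j :: nat
  assumes qn: "q dvd e * k" and cop: "algebraic_semidom_class.coprime j k" and qej: "q dvd e * j"
  shows "q dvd e"
proof -
  have "q dvd gcd (e * j) (e * k)" using qn qej by simp
  also have "gcd (e * j) (e * k) = e * gcd j k" by (simp add: gcd_mult_distrib_nat)
  also have "gcd j k = 1" using cop by simp
  finally show ?thesis by simp
qed



lemma keyK:
  fixes c a :: complex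
  assumes q: "q > 0" and e: "e > 0" and k: "k > 0" and n: "n = e * k" and qn: "q dvd n"
    and cm: "c ^ (n div q) = 1"
  shows "(\<Sum>\<xi>\<in>{\<xi>. \<xi>^q = c}. cyc_trace k (a * inverse \<xi> ^ e)) =
         (if q dvd e then of_nat q * cyc_trace k (a * inverse c ^ (e div q)) else 0)"
proof -
  have c0: "c \<noteq> 0"
  proof
    assume "c = 0"
    moreover have "n > 0" using n e k by simp
    hence "n div q > 0" using dvd_imp_le[OF qn] q by (simp add: div_greater_zero_iff)
    ultimately show False using cm by (simp add: zero_power)
  qed
  have rootS: "(inverse \<xi> ^ e) ^ k = 1" if "\<xi> \<in> {\<xi>. \<xi>^q = c}" for \<xi>
  proof -
    have "\<xi> ^ n = (\<xi> ^ q) ^ (n div q)" using qn by (simp add: power_mult[symmetric])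
    hence "\<xi> ^ n = 1" using that cm by simp
    moreover have "(inverse \<xi> ^ e) ^ k = inverse (\<xi> ^ n)"
      unfolding n by (simp only: power_mult[symmetric] power_inverse)
    ultimately show ?thesis by simp
  qed
  have rootc: "(inverse c ^ (e div q)) ^ k = 1" if qe: "q dvd e"
  proof -
    have "(e div q) * k = n div q" using qe n by (auto elim!: dvdE)
    hence "(inverse c ^ (e div q)) ^ k = inverse (c ^ (n div q))"
      by (simp only: power_mult[symmetric] power_inverse)
    thus ?thesis using cm by simp
  qed
  show ?thesis
  proof (cases "in_cyc_field k a")
    case False
    have "(\<Sum>\<xi>\<in>{\<xi>. \<xi>^q = c}. cyc_trace k (a * inverse \<xi> ^ e)) = 0"
      by (rule sum.neutral) (use trace_not_field[OF k False] rootS in blast)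
    moreover have "q dvd e \<Longrightarrow> cyc_trace k (a * inverse c ^ (e div q)) = 0"
      using trace_not_field[OF k False] rootc by blast
    ultimately show ?thesis by simp
  next
    case True
    then obtain P where P: "poly (map_poly of_rat P) (zeta k) = a" unfolding in_cyc_field_def by blast
    let ?P = "\<lambda>j. poly (map_poly of_rat P) (zeta k ^ j)"
    have "(\<Sum>\<xi>\<in>{\<xi>. \<xi>^q = c}. cyc_trace k (a * inverse \<xi> ^ e)) =
          (\<Sum>\<xi>\<in>{\<xi>. \<xi>^q = c}. \<Sum>j\<in>JJ k. ?P j * (inverse \<xi> ^ e)^j)"
      by (rule sum.cong[OF refl]) (rule trace_root_mult[OF k P rootS])
    also have "\<dots> = (\<Sum>j\<in>JJ k. ?P j * (\<Sum>\<xi>\<in>{\<xi>. \<xi>^q = c}. inverse \<xi> ^ (e * j)))"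
      by (subst sum.swap) (simp add: sum_distrib_left power_mult)
    also have "\<dots> = (\<Sum>j\<in>JJ k. ?P j * (if q dvd e * j then of_nat q * inverse c ^ (e * j div q) else 0))"
      by (rule sum.cong[OF refl]) (simp only: sum_inv_pow[OF q c0])
    finally have L: "(\<Sum>\<xi>\<in>{\<xi>. \<xi>^q = c}. cyc_trace k (a * inverse \<xi> ^ e)) =
       (\<Sum>j\<in>JJ k. ?P j * (if q dvd e * j then of_nat q * inverse c ^ (e * j div q) else 0))" .
    show ?thesis
    proof (cases "q dvd e")
      case qe: True
      have "(\<Sum>j\<in>JJ k. ?P j * (if q dvd e * j then of_nat q * inverse c ^ (e * j div q) else 0))
          = (\<Sum>j\<in>JJ k. of_nat q * (?P j * (inverse c ^ (e div q)) ^ j))"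
      proof (rule sum.cong[OF refl])
        fix j
        have "e * j div q = (e div q) * j" using qe by (auto elim!: dvdE)
        moreover have "q dvd e * j" using qe by simp
        ultimately show "?P j * (if q dvd e * j then of_nat q * inverse c ^ (e * j div q) else 0)
            = of_nat q * (?P j * (inverse c ^ (e div q)) ^ j)"
          by (simp add: power_mult)
      qed
      also have "\<dots> = of_nat q * cyc_trace k (a * inverse c ^ (e div q))"
        unfolding trace_root_mult[OF k P rootc[OF qe]] by (simp add: sum_distrib_left)
      finally show ?thesis using L qe by simp
    next
      case nqe: False
      have "(\<Sum>j\<in>JJ k. ?P j * (if q dvd e * j then of_nat q * inverse c ^ (e * j div q) else 0)) = 0"
      proof (rule sum.neutral, rule ballI)
        fix j assume "j \<in> JJ k"
        hence cop: "algebraic_semidom_class.coprime j k" unfolding JJ_def by simp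
        have "\<not> q dvd e * j" using dvd_ej[of q e k j] qn n cop nqe by blast
        thus "?P j * (if q dvd e * j then of_nat q * inverse c ^ (e * j div q) else 0) = 0" by simp
      qed
      thus ?thesis using L nqe by simp
    qed
  qed
qed



lemma reindex_dvd:
  fixes F :: "nat \<Rightarrow> complex"
  assumes nmq: "n = m * q" and q: "q > 0" and m: "m > 0"
  shows "(\<Sum>e\<in>{e. e dvd n}. (if q dvd e then F e else 0)) = (\<Sum>d\<in>{d. d dvd m}. F (d * q))"
proof -
  have n0: "n > 0" using nmq q m by simp
  have fin: "finite {e. e dvd n}" using finite_divisors_nat[OF n0] .
  have "(\<Sum>e\<in>{e. e dvd n}. (if q dvd e then F e else 0)) = (\<Sum>e\<in>{e \<in> {e. e dvd n}. q dvd e}. F e)"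
    by (rule sum.inter_filter[OF fin, symmetric])
  also have "\<dots> = (\<Sum>d\<in>{d. d dvd m}. F (d * q))"
  proof (rule sum.reindex_bij_betw[symmetric])
    show "bij_betw (\<lambda>d. d * q) {d. d dvd m} {e \<in> {e. e dvd n}. q dvd e}"
      unfolding bij_betw_def
    proof
      show "inj_on (\<lambda>d. d * q) {d. d dvd m}" using q by (auto intro: inj_onI)
      show "(\<lambda>d. d * q) ` {d. d dvd m} = {e \<in> {e. e dvd n}. q dvd e}"
      proof
        show "(\<lambda>d. d * q) ` {d. d dvd m} \<subseteq> {e \<in> {e. e dvd n}. q dvd e}"
          using nmq by auto
        show "{e \<in> {e. e dvd n}. q dvd e} \<subseteq> (\<lambda>d. d * q) ` {d. d dvd m}"
        proof
          fix e assume "e \<in> {e \<in> {e. e dvd n}. q dvd e}"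
          then have en: "e dvd n" and qe: "q dvd e" by auto
          from qe obtain d where "e = q * d" ..
          hence ed: "e = d * q" by (simp add: mult.commute)
          have "d * q dvd m * q" using en ed nmq by simp
          hence "d dvd m" using q by simp
          thus "e \<in> (\<lambda>d. d * q) ` {d. d dvd m}" using ed by blast
        qed
      qed
    qed
  qed
  finally show ?thesis .
qed

lemma swap3:
  fixes r :: complex
  shows "(\<Sum>\<xi>\<in>S. r * (\<Sum>C\<in>CC. \<Sum>e\<in>D. A C e * t \<xi> C e)) = r * (\<Sum>C\<in>CC. \<Sum>e\<in>D. A C e * (\<Sum>\<xi>\<in>S. t \<xi> C e))"
proof -
  have "(\<Sum>\<xi>\<in>S. r * (\<Sum>C\<in>CC. \<Sum>e\<in>D. A C e * t \<xi> C e)) = r * (\<Sum>\<xi>\<in>S. \<Sum>C\<in>CC. \<Sum>e\<in>D. A C e * t \<xi> C e)"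
    by (rule sum_distrib_left[symmetric])
  also have "(\<Sum>\<xi>\<in>S. \<Sum>C\<in>CC. \<Sum>e\<in>D. A C e * t \<xi> C e) = (\<Sum>C\<in>CC. \<Sum>\<xi>\<in>S. \<Sum>e\<in>D. A C e * t \<xi> C e)"
    by (rule sum.swap)
  also have "\<dots> = (\<Sum>C\<in>CC. \<Sum>e\<in>D. \<Sum>\<xi>\<in>S. A C e * t \<xi> C e)"
    by (rule sum.cong[OF refl], rule sum.swap)
  also have "\<dots> = (\<Sum>C\<in>CC. \<Sum>e\<in>D. A C e * (\<Sum>\<xi>\<in>S. t \<xi> C e))"
    by (simp only: sum_distrib_left)
  finally show ?thesis .
qed

theorem lemma3p2:
  fixes G :: "'g monoid" and n m :: nat and l :: int
    and \<epsilon> :: "nat \<Rightarrow> 'g \<Rightarrow> int" and \<chi> :: "'g \<Rightarrow> complex"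
  assumes "group G" and "finite (carrier G)"
    and "n > 0" and "m > 0" and "m dvd n"
    and "VPA G n \<epsilon>"
    and "ordinary_char G \<chi> \<or> (\<exists>p. prime p \<and> \<not> p dvd n \<and> brauer_char G p \<chi>)"
  shows "mu G m (vpa_pow n m \<epsilon>) \<chi> (zeta m powi l) =
         (\<Sum>\<xi>\<in>{\<xi>::complex. \<xi> ^ (n div m) = zeta m powi l}. mu G n \<epsilon> \<chi> \<xi>)"
proof -
  note n0 = \<open>n > 0\<close> and m0 = \<open>m > 0\<close> and mn = \<open>m dvd n\<close>
  define q where "q = n div m"
  define c where "c = zeta m powi l"
  have nmq: "n = m * q" using mn by (simp add: q_def)
  have q0: "q > 0" using n0 nmq by (cases q) auto
  have cm: "c ^ m = 1"
  proof -
    have z: "zeta m ^ m = 1" using zeta_pow_k[OF m0] .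
    have a1: "(zeta m ^ a)^m = 1" for a
    proof -
      have "(zeta m ^ a)^m = (zeta m ^ m)^a" by (simp only: power_mult[symmetric] mult.commute)
      thus ?thesis using z by simp
    qed
    have a2: "(inverse (zeta m) ^ a)^m = 1" for a
    proof -
      have "(inverse (zeta m) ^ a)^m = inverse ((zeta m ^ a)^m)" by (simp only: power_inverse)
      thus ?thesis using a1 by simp
    qed
    show ?thesis unfolding c_def power_int_def using a1 a2 by simp
  qed
  have cq: "c ^ (n div q) = 1" using nmq q0 cm by simp
  define S where "S = {\<xi>::complex. \<xi> ^ q = c}"
  define R where "R = (\<lambda>x. (\<Sum>d\<in>{d. d dvd m}. of_int (\<epsilon> (d * q) x) * cyc_trace (m div d) (\<chi> x * inverse c ^ d)))"
  define CC where "CC = conj_classes G"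
  define rep where "rep = (\<lambda>C::'g set. SOME x. x \<in> C)"
  have L: "mu G m (vpa_pow n m \<epsilon>) \<chi> c = (1 / of_nat m) * (\<Sum>C\<in>CC. R (rep C))"
    unfolding mu_def sum_classes_def vpa_pow_def R_def CC_def rep_def q_def ..
  have key: "(\<Sum>\<xi>\<in>S. cyc_trace (n div e) (a * inverse \<xi> ^ e)) =
        (if q dvd e then of_nat q * cyc_trace (n div e) (a * inverse c ^ (e div q)) else 0)"
    if e: "e dvd n" for e a
  proof -
    have e0: "e > 0" using e n0 by (cases e) auto
    have ne: "n = e * (n div e)" using e by simp
    have k0: "n div e > 0" using n0 ne by (cases "n div e") auto
    have qn: "q dvd n" using nmq by simp
    show ?thesis unfolding S_def by (rule keyK[OF q0 e0 k0 ne qn cq])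
  qed
  have inner: "(\<Sum>e\<in>{e. e dvd n}. of_int (\<epsilon> e x) * (\<Sum>\<xi>\<in>S. cyc_trace (n div e) (\<chi> x * inverse \<xi> ^ e)))
      = of_nat q * R x" for x
  proof -
    have "(\<Sum>e\<in>{e. e dvd n}. of_int (\<epsilon> e x) * (\<Sum>\<xi>\<in>S. cyc_trace (n div e) (\<chi> x * inverse \<xi> ^ e)))
        = (\<Sum>e\<in>{e. e dvd n}. (if q dvd e then of_int (\<epsilon> e x) * (of_nat q * cyc_trace (n div e) (\<chi> x * inverse c ^ (e div q))) else 0))"
      by (rule sum.cong[OF refl]) (simp add: key)
    also have "\<dots> = (\<Sum>d\<in>{d. d dvd m}. of_int (\<epsilon> (d * q) x) * (of_nat q * cyc_trace (n div (d * q)) (\<chi> x * inverse c ^ (d * q div q))))"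
      by (rule reindex_dvd[OF nmq q0 m0])
    also have "\<dots> = of_nat q * R x"
    proof -
      have "n div (d * q) = m div d" for d using nmq q0 by simp
      moreover have "d * q div q = d" for d using q0 by simp
      ultimately show ?thesis unfolding R_def sum_distrib_left
        by (intro sum.cong refl) (simp add: mult.left_commute)
    qed
    finally show ?thesis .
  qed
  have "(\<Sum>\<xi>\<in>S. mu G n \<epsilon> \<chi> \<xi>)
      = (\<Sum>\<xi>\<in>S. (1 / of_nat n) * (\<Sum>C\<in>CC. \<Sum>e\<in>{e. e dvd n}. of_int (\<epsilon> e (rep C)) * cyc_trace (n div e) (\<chi> (rep C) * inverse \<xi> ^ e)))"
    unfolding mu_def sum_classes_def CC_def rep_def ..
  also have "\<dots> = (1 / of_nat n) * (\<Sum>C\<in>CC. \<Sum>e\<in>{e. e dvd n}. of_int (\<epsilon> e (rep C)) * (\<Sum>\<xi>\<in>S. cyc_trace (n div e) (\<chi> (rep C) * inverse \<xi> ^ e)))"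
    by (rule swap3)
  also have "\<dots> = (1 / of_nat n) * (\<Sum>C\<in>CC. of_nat q * R (rep C))"
    by (simp only: inner)
  also have "\<dots> = (1 / of_nat m) * (\<Sum>C\<in>CC. R (rep C))"
  proof -
    have qn: "(of_nat q :: complex) / of_nat n = 1 / of_nat m" using nmq q0 m0 by (simp add: field_simps)
    have "(1 / of_nat n) * (\<Sum>C\<in>CC. of_nat q * R (rep C)) = (1 / of_nat n) * (of_nat q * (\<Sum>C\<in>CC. R (rep C)))"
      by (simp only: sum_distrib_left)
    also have "\<dots> = (of_nat q / of_nat n) * (\<Sum>C\<in>CC. R (rep C))" by simp
    finally show ?thesis unfolding qn .
  qed
  finally show ?thesis using L unfolding S_def q_def c_def by simp
qed


end
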